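(* Let $0<\alpha<\beta<1$. There exists a constant $\tilde C>0$, depending only on $\alpha$ and $\beta$, such that for every $\theta\in[0,1)$ and every $w\in V^\perp(\theta)$, $$|||w|||^2\le\tilde C\int_{Q_1}|w'(y)|^2\,dy.$$
   Context: $Q=(0,1)$, $Q_1=(0,\alpha)\cup(\beta,1)$. Let $p$ be a $1$-periodic measurable function with $p>0$, $p,p^{-1}\in L^\infty(0,1)$. For $\theta\in[0,1)$, $H^1_\theta(Q)=\{u\in H^1(0,1):u(1)=e^{2\pi i\theta}u(0)\}$ and $V(\theta)=\{v\in H^1_\theta(Q):p v'=0\text{ a.e. on }Q_1\}$. On $H^1(Q)$ use the norm $|||u|||=\bigl(|\int_{Q_1}u\,dy|^2+\int_Q|u'|^2dy\bigr)^{1/2}$ with associated inner product $\langle u,v\rangle=\bigl(\int_{Q_1}u\bigr)\overline{\bigl(\int_{Q_1}v\bigr)}+\int_Qu'\overline{v'}$. $V^\perp(\theta)$ is the orthogonal complement of $V(\theta)$ in $H^1_\theta(Q)$ with respect to this inner product. *)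

theory Defs
  imports "HOL-Analysis.Analysis"
begin

definition Q1 :: "real \<Rightarrow> real \<Rightarrow> real set" where
  "Q1 \<alpha> \<beta> = {0<..<\<alpha>} \<union> {\<beta><..<1}"

text \<open>u belongs to H^1(0,1) with weak derivative u' (absolutely continuous
  representative on [0,1], derivative in L^2(0,1)).\<close>
definition H1 :: "(real \<Rightarrow> complex) \<Rightarrow> (real \<Rightarrow> complex) \<Rightarrow> bool" where
  "H1 u u' \<longleftrightarrow> set_borel_measurable lborel {0..1} u'
     \<and> set_integrable lborel {0..1} (\<lambda>x. (cmod (u' x))\<^sup>2)
     \<and> (\<forall>x\<in>{0..1}. u x = u 0 + (LINT t:{0..x}|lborel. u' t))"

definition H1_theta :: "real \<Rightarrow> (real \<Rightarrow> complex) \<Rightarrow> (real \<Rightarrow> complex) \<Rightarrow> bool" where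
  "H1_theta \<theta> u u' \<longleftrightarrow> H1 u u' \<and> u 1 = exp (2 * pi * \<i> * complex_of_real \<theta>) * u 0"

definition V_theta :: "(real \<Rightarrow> real) \<Rightarrow> real \<Rightarrow> real \<Rightarrow> real \<Rightarrow> (real \<Rightarrow> complex) \<Rightarrow> (real \<Rightarrow> complex) \<Rightarrow> bool" where
  "V_theta p \<alpha> \<beta> \<theta> v v' \<longleftrightarrow> H1_theta \<theta> v v'
     \<and> (AE x in lborel. x \<in> Q1 \<alpha> \<beta> \<longrightarrow> complex_of_real (p x) * v' x = 0)"

definition ip :: "real \<Rightarrow> real \<Rightarrow> (real \<Rightarrow> complex) \<Rightarrow> (real \<Rightarrow> complex) \<Rightarrow> (real \<Rightarrow> complex) \<Rightarrow> (real \<Rightarrow> complex) \<Rightarrow> complex" where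
  "ip \<alpha> \<beta> u u' v v' = (LINT y:Q1 \<alpha> \<beta>|lborel. u y) * cnj (LINT y:Q1 \<alpha> \<beta>|lborel. v y)
      + (LINT y:{0<..<1}|lborel. u' y * cnj (v' y))"

definition tnorm_sq :: "real \<Rightarrow> real \<Rightarrow> (real \<Rightarrow> complex) \<Rightarrow> (real \<Rightarrow> complex) \<Rightarrow> real" where
  "tnorm_sq \<alpha> \<beta> u u' = (cmod (LINT y:Q1 \<alpha> \<beta>|lborel. u y))\<^sup>2
      + (LINT y:{0<..<1}|lborel. (cmod (u' y))\<^sup>2)"

definition V_perp :: "(real \<Rightarrow> real) \<Rightarrow> real \<Rightarrow> real \<Rightarrow> real \<Rightarrow> (real \<Rightarrow> complex) \<Rightarrow> (real \<Rightarrow> complex) \<Rightarrow> bool" where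
  "V_perp p \<alpha> \<beta> \<theta> w w' \<longleftrightarrow> H1_theta \<theta> w w'
     \<and> (\<forall>v v'. V_theta p \<alpha> \<beta> \<theta> v v' \<longrightarrow> ip \<alpha> \<beta> w w' v v' = 0)"

definition admissible_coeff :: "(real \<Rightarrow> real) \<Rightarrow> bool" where
  "admissible_coeff p \<longleftrightarrow> p \<in> borel_measurable lborel
     \<and> (\<forall>x. p (x + 1) = p x) \<and> (\<forall>x. p x > 0)
     \<and> (\<exists>M. AE x in lborel. x \<in> {0<..<1} \<longrightarrow> \<bar>p x\<bar> \<le> M)
     \<and> (\<exists>M. AE x in lborel. x \<in> {0<..<1} \<longrightarrow> \<bar>1 / p x\<bar> \<le> M)"

end

theory Submission
  imports Defs
begin


lemma fin01: "S \<subseteq> {0..1::real} \<Longrightarrow> emeasure lborel S < \<infinity>"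
proof -
  assume "S \<subseteq> {0..1::real}"
  then have "emeasure lborel S \<le> emeasure lborel {0..1::real}" by (intro emeasure_mono) auto
  also have "\<dots> < \<infinity>" by simp
  finally show ?thesis .
qed

lemma sint_const:
  fixes c :: "'a::{banach,second_countable_topology}"
  shows "S \<in> sets lborel \<Longrightarrow> S \<subseteq> {0..1::real} \<Longrightarrow> set_integrable lborel S (\<lambda>x. c)"
  unfolding set_integrable_def using fin01 by (intro integrable_indicator) auto

lemma sq_bound: "(t::real) \<le> 1 + t\<^sup>2"
proof -
  have "0 \<le> (t - 1/2)\<^sup>2" by simp
  then show ?thesis by (simp add: power2_eq_square algebra_simps)
qed

lemma H1_int:
  assumes "H1 u u'" "S \<in> sets lborel" "S \<subseteq> {0..1}"
  shows "set_integrable lborel S u'"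
proof -
  have m: "set_borel_measurable lborel {0..1} u'" and sq: "set_integrable lborel {0..1} (\<lambda>x. (cmod (u' x))\<^sup>2)"
    using assms(1) unfolding H1_def by auto
  have "set_integrable lborel {0..1} (\<lambda>x. 1 + (cmod (u' x))\<^sup>2)"
    by (rule set_integral_add(1)[OF sint_const sq]) auto
  then have "set_integrable lborel {0..1} u'"
    by (rule set_integrable_bound[OF _ m]) (auto intro!: AE_I2 simp: sq_bound)
  then show ?thesis using set_integrable_subset assms by blast
qed

lemma H1_sq_int:
  assumes "H1 u u'" "S \<in> sets lborel" "S \<subseteq> {0..1}"
  shows "set_integrable lborel S (\<lambda>x. (cmod (u' x))\<^sup>2)"
  using assms set_integrable_subset unfolding H1_def by blast

lemma set_integral_nonneg':
  fixes h :: "_ \<Rightarrow> real"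
  shows "(\<And>x. x \<in> S \<Longrightarrow> 0 \<le> h x) \<Longrightarrow> 0 \<le> (LINT x:S|M. h x)"
  unfolding set_lebesgue_integral_def by (intro Bochner_Integration.integral_nonneg) (auto simp: indicator_def)

lemma CS_real:
  fixes g :: "_ \<Rightarrow> real"
  assumes gi: "set_integrable M S g" and g2: "set_integrable M S (\<lambda>x. (g x)\<^sup>2)"
    and S: "S \<in> sets M" "emeasure M S < \<infinity>"
  shows "(LINT x:S|M. g x)\<^sup>2 \<le> measure M S * (LINT x:S|M. (g x)\<^sup>2)"
proof -
  define N where "N = (LINT x:S|M. g x)"
  define L where "L = measure M S"
  define R where "R = (LINT x:S|M. (g x)\<^sup>2)"
  have ci: "set_integrable M S (\<lambda>x. c)" for c :: real
    unfolding set_integrable_def using S by (intro integrable_indicator) auto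
  have key: "0 \<le> R - 2 * c * N + c\<^sup>2 * L" for c :: real
  proof -
    have eq: "(\<lambda>x. (g x - c)\<^sup>2) = (\<lambda>x. ((g x)\<^sup>2 - 2 * c * g x) + c\<^sup>2)"
      by (auto simp: power2_eq_square algebra_simps)
    have i1: "set_integrable M S (\<lambda>x. 2 * c * g x)" using gi by auto
    have "(LINT x:S|M. (g x - c)\<^sup>2) = (LINT x:S|M. ((g x)\<^sup>2 - 2 * c * g x)) + (LINT x:S|M. c\<^sup>2)"
      unfolding eq by (rule set_integral_add(2)[OF set_integral_diff(1)[OF g2 i1] ci])
    also have "\<dots> = R - 2 * c * N + c\<^sup>2 * L"
      using set_integral_diff(2)[OF g2 i1] set_integral_const[OF S(1), of "c\<^sup>2"] S
      unfolding R_def N_def L_def by (simp add: less_top)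
    finally have "(LINT x:S|M. (g x - c)\<^sup>2) = R - 2 * c * N + c\<^sup>2 * L" .
    moreover have "0 \<le> (LINT x:S|M. (g x - c)\<^sup>2)" by (rule set_integral_nonneg') simp
    ultimately show ?thesis by simp
  qed
  have L0: "L \<ge> 0" unfolding L_def by simp
  show ?thesis
  proof (cases "L = 0")
    case True
    have "N = 0"
    proof (rule ccontr)
      assume "N \<noteq> 0"
      have "0 \<le> R - 2 * ((R + 1) / (2 * N)) * N" using key[of "(R + 1) / (2 * N)"] True by simp
      also have "\<dots> = -1" using \<open>N \<noteq> 0\<close> by (simp add: field_simps)
      finally show False by simp
    qed
    then show ?thesis using True unfolding N_def L_def by simp
  next
    case False
    then have Lp: "L > 0" using L0 by simp
    have "0 \<le> R - 2 * (N / L) * N + (N / L)\<^sup>2 * L" by (rule key)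
    also have "\<dots> = R - N\<^sup>2 / L" using Lp by (simp add: power2_eq_square field_simps)
    finally have "N\<^sup>2 / L \<le> R" by simp
    then show ?thesis using Lp unfolding N_def[symmetric] L_def[symmetric] R_def[symmetric]
      by (simp add: divide_le_eq mult.commute)
  qed
qed

lemma CS_H1:
  assumes "H1 u u'" "S \<in> sets lborel" "S \<subseteq> {0..1}"
  shows "(cmod (LINT x:S|lborel. u' x))\<^sup>2 \<le> measure lborel S * (LINT x:S|lborel. (cmod (u' x))\<^sup>2)"
proof -
  have i: "set_integrable lborel S u'" by (rule H1_int[OF assms])
  have "cmod (LINT x:S|lborel. u' x) \<le> (LINT x:S|lborel. cmod (u' x))"
    by (rule set_integral_norm_bound[OF i])
  then have "(cmod (LINT x:S|lborel. u' x))\<^sup>2 \<le> (LINT x:S|lborel. cmod (u' x))\<^sup>2"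
    by (intro power_mono) auto
  also have "\<dots> \<le> measure lborel S * (LINT x:S|lborel. (cmod (u' x))\<^sup>2)"
    by (rule CS_real[OF set_integrable_norm[OF i] H1_sq_int[OF assms] assms(2) fin01[OF assms(3)]])
  finally show ?thesis .
qed

lemma set_integral_mono_set:
  fixes h :: "_ \<Rightarrow> real"
  assumes "S \<subseteq> T" "S \<in> sets M" "set_integrable M T h" "\<And>x. x \<in> T \<Longrightarrow> 0 \<le> h x"
  shows "(LINT x:S|M. h x) \<le> (LINT x:T|M. h x)"
proof -
  have "set_integrable M S h" using set_integrable_subset assms by blast
  then show ?thesis using assms unfolding set_lebesgue_integral_def set_integrable_def
    by (intro integral_mono) (auto simp: indicator_def)
qed

lemma set_integral_fin_diff:
  fixes f :: "real \<Rightarrow> 'b::{banach,second_countable_topology}"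
  assumes "finite X" "(A - B) \<union> (B - A) \<subseteq> X"
  shows "(LINT x:A|lborel. f x) = (LINT x:B|lborel. f x)"
  by (rule set_integral_discrete_difference[OF countable_finite[OF assms(1)] assms(2)]) auto

lemma split_Icc:
  fixes f :: "real \<Rightarrow> 'b::{banach,second_countable_topology}"
  assumes "0 \<le> x" "x \<le> y" "set_integrable lborel {0..y} f"
  shows "(LINT t:{0..y}|lborel. f t) = (LINT t:{0..x}|lborel. f t) + (LINT t:{x<..y}|lborel. f t)"
proof -
  have "{0..y} = {0..x} \<union> {x<..y}" using assms by auto
  moreover have "set_integrable lborel {0..x} f" "set_integrable lborel {x<..y} f"
  proof -
    have s1: "{0..x} \<subseteq> {0..y}" "{x<..y} \<subseteq> {0..y}" using assms(1,2) by (auto simp: subset_iff)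
    show "set_integrable lborel {0..x} f" by (rule set_integrable_subset[OF assms(3) _ s1(1)]) simp
    show "set_integrable lborel {x<..y} f" by (rule set_integrable_subset[OF assms(3) _ s1(2)]) simp
  qed
  moreover have d: "{0..x} \<inter> {x<..y} = {}" by auto
  ultimately show ?thesis using set_integral_Un[OF d, of lborel f] by simp
qed



lemma set_integrable_of_real:
  fixes f :: "_ \<Rightarrow> real"
  assumes "set_integrable M S f"
  shows "set_integrable M S (\<lambda>x. complex_of_real (f x))"
proof -
  have eq: "(\<lambda>x. indicator S x *\<^sub>R complex_of_real (f x)) = (\<lambda>x. complex_of_real (indicator S x *\<^sub>R f x))"
    by (auto simp: fun_eq_iff indicator_def)
  show ?thesis using assms unfolding set_integrable_def eq complex_of_real_integrable_eq .
qed

lemma sq2: "((a::real) + b)\<^sup>2 \<le> 2 * a\<^sup>2 + 2 * b\<^sup>2"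
proof -
  have "0 \<le> (a - b)\<^sup>2" by simp
  then show ?thesis by (simp add: power2_eq_square algebra_simps)
qed

lemma test_fn:
  fixes w w' :: "real \<Rightarrow> complex" and s c1 c2 :: complex and \<alpha> \<beta> \<theta> :: real
  assumes ab: "0 < \<alpha>" "\<alpha> < \<beta>" "\<beta> < 1"
    and H: "H1 w w'"
    and cond: "s + c1 * (LINT t:{\<alpha><..<\<beta>}|lborel. w' t) + c2 * of_real (\<beta> - \<alpha>) = exp (2 * pi * \<i> * complex_of_real \<theta>) * s"
  defines "v' \<equiv> \<lambda>x. indicator {\<alpha><..<\<beta>} x *\<^sub>R (c1 * w' x + c2)"
    and "v \<equiv> \<lambda>x. s + (LINT t:{0..x}|lborel. indicator {\<alpha><..<\<beta>} t *\<^sub>R (c1 * w' t + c2))"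
  shows "V_theta p \<alpha> \<beta> \<theta> v v'"
    and "(LINT y:Q1 \<alpha> \<beta>|lborel. v y) = s * (of_real \<alpha> + exp (2 * pi * \<i> * complex_of_real \<theta>) * of_real (1 - \<beta>))"
    and "(LINT y:{0<..<1}|lborel. w' y * cnj (v' y)) = cnj c1 * of_real (LINT y:{\<alpha><..<\<beta>}|lborel. (cmod (w' y))\<^sup>2) + cnj c2 * (LINT t:{\<alpha><..<\<beta>}|lborel. w' t)"
proof -
  have v_def: "v = (\<lambda>x. s + (LINT t:{0..x}|lborel. v' t))" unfolding v_def v'_def ..
  define E where "E = exp (2 * pi * \<i> * complex_of_real \<theta>)"
  define D where "D = (LINT t:{\<alpha><..<\<beta>}|lborel. w' t)"
  define g where "g = (\<lambda>x. c1 * w' x + c2)"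
  have sab: "{\<alpha><..<\<beta>} \<subseteq> {0..1}" using ab by auto
  have wi: "set_integrable lborel {\<alpha><..<\<beta>} w'" by (rule H1_int[OF H _ sab]) simp
  have ci: "set_integrable lborel {\<alpha><..<\<beta>} (\<lambda>x. c2)" by (rule sint_const[OF _ sab]) simp
  have gi: "set_integrable lborel {\<alpha><..<\<beta>} g"
    unfolding g_def by (rule set_integral_add(1)[OF _ ci]) (use wi in auto)
  have Gval: "(LINT t:{\<alpha><..<\<beta>}|lborel. g t) = c1 * D + c2 * of_real (\<beta> - \<alpha>)"
  proof -
    have "(LINT t:{\<alpha><..<\<beta>}|lborel. g t) = (LINT t:{\<alpha><..<\<beta>}|lborel. c1 * w' t) + (LINT t:{\<alpha><..<\<beta>}|lborel. c2)"
      unfolding g_def by (rule set_integral_add(2)[OF _ ci]) (use wi in auto)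
    also have "\<dots> = c1 * D + c2 * of_real (\<beta> - \<alpha>)"
      using set_integral_const[of "{\<alpha><..<\<beta>}" lborel c2] ab unfolding D_def
      by (simp add: scaleR_conv_of_real mult.commute)
    finally show ?thesis .
  qed
  have vint: "(LINT t:{0..x}|lborel. v' t) = (LINT t:({0..x} \<inter> {\<alpha><..<\<beta>})|lborel. g t)" for x
    unfolding v'_def g_def set_lebesgue_integral_def by (simp add: indicator_inter_arith mult.commute)
  have v_lo: "v x = s" if "x \<le> \<alpha>" for x
  proof -
    have "{0..x} \<inter> {\<alpha><..<\<beta>} = {}" using that by auto
    then show ?thesis unfolding v_def vint by (simp add: set_lebesgue_integral_def)
  qed
  have v_hi: "v x = E * s" if "\<beta> \<le> x" for x
  proof -
    have "{0..x} \<inter> {\<alpha><..<\<beta>} = {\<alpha><..<\<beta>}" using that ab by auto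
    then show ?thesis unfolding v_def vint using Gval cond unfolding E_def D_def by (simp add: add.assoc)
  qed
  have mw: "(\<lambda>x. indicator {0..1} x *\<^sub>R w' x) \<in> borel_measurable lborel"
    using H unfolding H1_def set_borel_measurable_def by auto
  have eqm: "(\<lambda>x. indicator {0..1} x *\<^sub>R v' x) = (\<lambda>x. indicator {\<alpha><..<\<beta>} x *\<^sub>R (c1 * (indicator {0..1} x *\<^sub>R w' x) + c2))"
    using ab by (auto simp: fun_eq_iff v'_def indicator_def)
  have mv: "(\<lambda>x. indicator {0..1} x *\<^sub>R v' x) \<in> borel_measurable lborel"
    unfolding eqm using mw by measurable
  have sq: "set_integrable lborel {0..1} (\<lambda>x. (cmod (v' x))\<^sup>2)"
  proof -
    have wsq: "set_integrable lborel {0..1} (\<lambda>x. (cmod (w' x))\<^sup>2)" using H unfolding H1_def by auto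
    have b: "set_integrable lborel {0..1} (\<lambda>x. 2 * (cmod c1)\<^sup>2 * (cmod (w' x))\<^sup>2 + 2 * (cmod c2)\<^sup>2)"
      by (rule set_integral_add(1)[OF _ sint_const]) (use wsq in auto)
    have eq2: "(\<lambda>x. indicator {0..1} x *\<^sub>R (cmod (v' x))\<^sup>2) = (\<lambda>x. (cmod (indicator {0..1} x *\<^sub>R v' x))\<^sup>2)"
      by (auto simp: fun_eq_iff indicator_def)
    have m2: "set_borel_measurable lborel {0..1} (\<lambda>x. (cmod (v' x))\<^sup>2)"
      unfolding set_borel_measurable_def eq2 using mv by measurable
    show ?thesis
    proof (rule set_integrable_bound[OF b m2], rule AE_I2, intro impI)
      fix x :: real
      have "(cmod (v' x))\<^sup>2 \<le> (cmod (c1 * w' x + c2))\<^sup>2"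
        unfolding v'_def by (auto simp: indicator_def)
      also have "\<dots> \<le> (cmod c1 * cmod (w' x) + cmod c2)\<^sup>2"
        using norm_triangle_ineq[of "c1 * w' x" c2] by (intro power_mono) (auto simp: norm_mult)
      also have "\<dots> \<le> 2 * (cmod c1 * cmod (w' x))\<^sup>2 + 2 * (cmod c2)\<^sup>2" by (rule sq2)
      finally have "(cmod (v' x))\<^sup>2 \<le> 2 * (cmod c1)\<^sup>2 * (cmod (w' x))\<^sup>2 + 2 * (cmod c2)\<^sup>2"
        by (simp add: power_mult_distrib)
      then show "norm ((cmod (v' x))\<^sup>2) \<le> norm (2 * (cmod c1)\<^sup>2 * (cmod (w' x))\<^sup>2 + 2 * (cmod c2)\<^sup>2)"
        by simp
    qed
  qed
  have v0: "v 0 = s" using v_lo ab by simp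
  have H1v: "H1 v v'"
    unfolding H1_def set_borel_measurable_def using mv sq v0 by (simp add: v_def)
  have v1: "v 1 = E * v 0" using v_hi[of 1] v0 ab by simp
  show "V_theta p \<alpha> \<beta> \<theta> v v'"
    unfolding V_theta_def H1_theta_def using H1v v1 unfolding E_def
    by (auto intro!: AE_I2 simp: Q1_def v'_def indicator_def)
  show "(LINT y:Q1 \<alpha> \<beta>|lborel. v y) = s * (of_real \<alpha> + exp (2 * pi * \<i> * complex_of_real \<theta>) * of_real (1 - \<beta>))"
  proof -
    have s1: "{0<..<\<alpha>} \<subseteq> {0..1}" "{\<beta><..<1} \<subseteq> {0..1}" using ab by auto
    have i1: "set_integrable lborel {0<..<\<alpha>} v"
      using sint_const[OF _ s1(1), of s] v_lo by (subst set_integrable_cong[where f'="\<lambda>x. s"]) auto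
    have i2: "set_integrable lborel {\<beta><..<1} v"
      using sint_const[OF _ s1(2), of "E * s"] v_hi by (subst set_integrable_cong[where f'="\<lambda>x. E * s"]) auto
    have "(LINT y:Q1 \<alpha> \<beta>|lborel. v y) = (LINT y:{0<..<\<alpha>}|lborel. v y) + (LINT y:{\<beta><..<1}|lborel. v y)"
      unfolding Q1_def by (rule set_integral_Un[OF _ i1 i2]) (use ab in auto)
    also have "(LINT y:{0<..<\<alpha>}|lborel. v y) = (LINT y:{0<..<\<alpha>}|lborel. s)"
      by (rule set_lebesgue_integral_cong) (use v_lo in auto)
    also have "\<dots> = of_real \<alpha> * s"
      using set_integral_const[of "{0<..<\<alpha>}" lborel s] ab by (simp add: scaleR_conv_of_real)
    also have "(LINT y:{\<beta><..<1}|lborel. v y) = (LINT y:{\<beta><..<1}|lborel. E * s)"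
      by (rule set_lebesgue_integral_cong) (use v_hi in auto)
    also have "\<dots> = of_real (1 - \<beta>) * (E * s)"
      using set_integral_const[of "{\<beta><..<1}" lborel "E * s"] ab by (simp add: scaleR_conv_of_real del: of_real_diff)
    finally show ?thesis unfolding E_def by (simp add: algebra_simps)
  qed
  show "(LINT y:{0<..<1}|lborel. w' y * cnj (v' y)) = cnj c1 * of_real (LINT y:{\<alpha><..<\<beta>}|lborel. (cmod (w' y))\<^sup>2) + cnj c2 * (LINT t:{\<alpha><..<\<beta>}|lborel. w' t)"
  proof -
    define h where "h = (\<lambda>y. cnj c1 * complex_of_real ((cmod (w' y))\<^sup>2) + cnj c2 * w' y)"
    have pw: "indicator {0<..<1} y *\<^sub>R (w' y * cnj (v' y)) = indicator {\<alpha><..<\<beta>} y *\<^sub>R h y" for y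
      using ab complex_norm_square[of "w' y"] by (cases "y \<in> {\<alpha><..<\<beta>}") (auto simp: v'_def h_def indicator_def algebra_simps)
    have "(LINT y:{0<..<1}|lborel. w' y * cnj (v' y)) = (LINT y:{\<alpha><..<\<beta>}|lborel. h y)"
      unfolding set_lebesgue_integral_def pw ..
    also have "\<dots> = (LINT y:{\<alpha><..<\<beta>}|lborel. cnj c1 * complex_of_real ((cmod (w' y))\<^sup>2)) + (LINT y:{\<alpha><..<\<beta>}|lborel. cnj c2 * w' y)"
    proof -
      have q: "set_integrable lborel {\<alpha><..<\<beta>} (\<lambda>y. complex_of_real ((cmod (w' y))\<^sup>2))"
        by (rule set_integrable_of_real[OF H1_sq_int[OF H _ sab]]) simp
      show ?thesis unfolding h_def by (rule set_integral_add(2)) (use q wi in auto)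
    qed
    also have "\<dots> = cnj c1 * of_real (LINT y:{\<alpha><..<\<beta>}|lborel. (cmod (w' y))\<^sup>2) + cnj c2 * D"
      unfolding D_def set_integral_mult_right set_integral_complex_of_real ..
    finally show ?thesis unfolding D_def .
  qed
qed



lemma Kbound:
  fixes e :: complex and \<alpha> \<beta> :: real
  assumes "0 < \<alpha>" "\<alpha> < \<beta>" "\<beta> < 1" "cmod e = 1"
  shows "(\<alpha> + 1 - \<beta>)\<^sup>2 \<le> (cmod (\<alpha> + e * (1 - \<beta>)))\<^sup>2 + (cmod (e - 1))\<^sup>2 / (\<beta> - \<alpha>)"
proof -
  have e2: "(Re e)\<^sup>2 + (Im e)\<^sup>2 = 1" using assms(4) by (metis cmod_power2 power_one)
  have re: "Re e \<le> 1" using assms(4) complex_Re_le_cmod by (metis)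
  have c1: "(cmod (\<alpha> + e * (1 - \<beta>)))\<^sup>2 = (\<alpha> + Re e * (1-\<beta>))\<^sup>2 + (Im e * (1-\<beta>))\<^sup>2"
    by (simp add: cmod_power2)
  have c2: "(cmod (e - 1))\<^sup>2 = (Re e - 1)\<^sup>2 + (Im e)\<^sup>2" by (simp add: cmod_power2)
  have "(cmod (e - 1))\<^sup>2 \<le> (cmod (e - 1))\<^sup>2 / (\<beta> - \<alpha>)"
  proof -
    have "0 < \<beta> - \<alpha>" "\<beta> - \<alpha> \<le> 1" using assms by auto
    then show ?thesis by (simp add: le_divide_eq mult_left_le)
  qed
  moreover have "(\<alpha> + 1 - \<beta>)\<^sup>2 \<le> (cmod (\<alpha> + e * (1 - \<beta>)))\<^sup>2 + (cmod (e - 1))\<^sup>2"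
  proof -
    have "(cmod (\<alpha> + e * (1 - \<beta>)))\<^sup>2 + (cmod (e - 1))\<^sup>2 - (\<alpha> + 1 - \<beta>)\<^sup>2
       = 2 * (1 - Re e) * (1 - \<alpha> * (1 - \<beta>))"
    proof -
      have im: "(Im e)\<^sup>2 = 1 - (Re e)\<^sup>2" using e2 by simp
      show ?thesis unfolding c1 c2 power_mult_distrib im by (simp add: power2_eq_square algebra_simps)
    qed
    moreover have "0 \<le> 2 * (1 - Re e) * (1 - \<alpha> * (1 - \<beta>))"
    proof -
      have "\<alpha> * (1 - \<beta>) \<le> 1" using assms by (smt (verit) mult_le_one)
      then show ?thesis using re by simp
    qed
    ultimately show ?thesis by linarith
  qed
  ultimately show ?thesis by linarith
qed

definition Cc :: "real \<Rightarrow> real \<Rightarrow> real" where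
  "Cc \<alpha> \<beta> = (2 + 4 / (\<beta> - \<alpha>)) / (\<alpha> + 1 - \<beta>)\<^sup>2"

definition CC :: "real \<Rightarrow> real \<Rightarrow> real" where
  "CC \<alpha> \<beta> = (Cc \<alpha> \<beta> + 2)\<^sup>2 + 1 + (2 * Cc \<alpha> \<beta> + 2)\<^sup>2 / (\<beta> - \<alpha>)"

lemma CC_pos: "\<alpha> < \<beta> \<Longrightarrow> CC \<alpha> \<beta> > 0"
proof -
  assume "\<alpha> < \<beta>"
  then have "0 \<le> (2 * Cc \<alpha> \<beta> + 2)\<^sup>2 / (\<beta> - \<alpha>)" by simp
  moreover have "0 \<le> (Cc \<alpha> \<beta> + 2)\<^sup>2" by simp
  ultimately show ?thesis unfolding CC_def by linarith
qed

lemma algebra_part: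
  fixes e a D I :: complex and \<alpha> \<beta> A B :: real
  assumes "0 < \<alpha>" "\<alpha> < \<beta>" "\<beta> < 1" "cmod e = 1" "0 \<le> A"
    and hD: "cmod (D - (e - 1) * a) \<le> 2 * sqrt A"
    and hI: "cmod (I - a * (\<alpha> + e * (1 - \<beta>))) \<le> 2 * sqrt A"
    and orth: "I * cnj (\<alpha> + e * (1 - \<beta>)) + cnj ((e - 1) / (\<beta> - \<alpha>)) * D = 0"
    and hB: "B = (cmod D)\<^sup>2 / (\<beta> - \<alpha>)"
  shows "(cmod I)\<^sup>2 + A + B \<le> CC \<alpha> \<beta> * A"
proof -
  define s where "s = sqrt A"
  have s0: "s \<ge> 0" and sA: "s\<^sup>2 = A" using assms by (auto simp: s_def)
  define P where "P = \<alpha> + e * (1 - \<beta>)"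
  define Q where "Q = (e - 1) / (\<beta> - \<alpha>)"
  define E1 where "E1 = D - (e - 1) * a"
  define E2 where "E2 = I - a * P"
  define K where "K = (cmod P)\<^sup>2 + (cmod (e - 1))\<^sup>2 / (\<beta> - \<alpha>)"
  define k where "k = (\<alpha> + 1 - \<beta>)\<^sup>2"
  have ba: "\<beta> - \<alpha> > 0" using assms by simp
  have kpos: "k > 0" unfolding k_def using assms by simp
  have kK: "k \<le> K" unfolding k_def K_def P_def using Kbound[OF assms(1-4)] .
  have PP: "P * cnj P = of_real ((cmod P)\<^sup>2)" using complex_norm_square[of P] by simp
  have QQ: "cnj Q * (e - 1) = of_real ((cmod (e - 1))\<^sup>2 / (\<beta> - \<alpha>))"
    unfolding Q_def using complex_norm_square[of "e-1"] by (simp add: mult.commute)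
  have "a * of_real K = - (E2 * cnj P + cnj Q * E1)"
  proof -
    have "(a * P + E2) * cnj P + cnj Q * ((e - 1) * a + E1) = 0"
      using orth unfolding E1_def E2_def P_def Q_def by simp
    then have "a * (P * cnj P) + a * (cnj Q * (e - 1)) = - (E2 * cnj P + cnj Q * E1)"
      by (simp add: algebra_simps)
    then show ?thesis unfolding PP QQ K_def by (simp add: algebra_simps)
  qed
  then have "cmod (a * of_real K) = cmod (E2 * cnj P + cnj Q * E1)" by (simp only: norm_minus_cancel)
  moreover have "K \<ge> 0" using kK kpos by linarith
  ultimately have "cmod a * K = cmod (E2 * cnj P + cnj Q * E1)" by (simp add: norm_mult)
  also have "\<dots> \<le> cmod E2 * cmod P + cmod Q * cmod E1"
    using norm_triangle_ineq[of "E2 * cnj P" "cnj Q * E1"] by (simp add: norm_mult)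
  also have "\<dots> \<le> 2 * s * 1 + (2 / (\<beta> - \<alpha>)) * (2 * s)"
  proof (intro add_mono mult_mono)
    show "cmod E2 \<le> 2 * s" using hI unfolding E2_def P_def s_def .
    show "cmod E1 \<le> 2 * s" using hD unfolding E1_def s_def .
    show "cmod P \<le> 1" unfolding P_def
    proof -
      have "cmod (complex_of_real \<alpha> + e * complex_of_real (1 - \<beta>)) \<le> cmod (complex_of_real \<alpha>) + cmod (e * complex_of_real (1 - \<beta>))"
        by (rule norm_triangle_ineq)
      also have "\<dots> = \<alpha> + (1 - \<beta>)" using assms by (simp add: norm_mult del: of_real_diff)
      finally show "cmod (complex_of_real \<alpha> + e * complex_of_real (1 - \<beta>)) \<le> 1" using assms by simp
    qed
    show "cmod Q \<le> 2 / (\<beta> - \<alpha>)" unfolding Q_def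
    proof -
      have "cmod (e - 1) \<le> 2" using norm_triangle_ineq4[of e 1] assms by simp
      then show "cmod ((e - 1) / complex_of_real (\<beta> - \<alpha>)) \<le> 2 / (\<beta> - \<alpha>)"
        using ba by (simp add: norm_divide divide_right_mono del: of_real_diff)
    qed
  qed (use s0 ba in auto)
  finally have aK: "cmod a * K \<le> (2 + 4 / (\<beta> - \<alpha>)) * s" by (simp add: algebra_simps)
  have a_le: "cmod a \<le> Cc \<alpha> \<beta> * s"
  proof -
    have "cmod a * k \<le> cmod a * K" using kK by (simp add: mult_left_mono)
    then have "cmod a * k \<le> (2 + 4 / (\<beta> - \<alpha>)) * s" using aK by linarith
    then show ?thesis unfolding Cc_def k_def[symmetric] using kpos
      by (simp add: pos_le_divide_eq mult.commute mult.left_commute)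
  qed
  define c where "c = Cc \<alpha> \<beta>"
  have c0: "c \<ge> 0" unfolding c_def Cc_def using ba by simp
  have hDb: "cmod D \<le> (2 * c + 2) * s"
  proof -
    have "cmod D \<le> cmod ((e - 1) * a) + cmod E1" using norm_triangle_ineq[of "(e - 1) * a" E1] unfolding E1_def by simp
    also have "\<dots> \<le> 2 * cmod a + 2 * s"
    proof (intro add_mono)
      have "cmod (e - 1) \<le> 2" using norm_triangle_ineq4[of e 1] assms by simp
      then show "cmod ((e - 1) * a) \<le> 2 * cmod a" by (simp add: norm_mult mult_right_mono)
      show "cmod E1 \<le> 2 * s" using hD unfolding E1_def s_def .
    qed
    finally show ?thesis using a_le unfolding c_def by (simp add: algebra_simps)
  qed
  have hIb: "cmod I \<le> (c + 2) * s"
  proof -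
    have "cmod I \<le> cmod (a * P) + cmod E2" using norm_triangle_ineq[of "a * P" E2] unfolding E2_def by simp
    also have "\<dots> \<le> cmod a + 2 * s"
    proof (intro add_mono)
      have "cmod P \<le> 1" unfolding P_def
      proof -
        have "cmod (complex_of_real \<alpha> + e * complex_of_real (1 - \<beta>)) \<le> cmod (complex_of_real \<alpha>) + cmod (e * complex_of_real (1 - \<beta>))"
          by (rule norm_triangle_ineq)
        also have "\<dots> = \<alpha> + (1 - \<beta>)" using assms by (simp add: norm_mult del: of_real_diff)
        finally show "cmod (complex_of_real \<alpha> + e * complex_of_real (1 - \<beta>)) \<le> 1" using assms by simp
      qed
      then show "cmod (a * P) \<le> cmod a" by (simp add: norm_mult mult_left_le)
      show "cmod E2 \<le> 2 * s" using hI unfolding E2_def P_def s_def .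
    qed
    finally show ?thesis using a_le unfolding c_def by (simp add: algebra_simps)
  qed
  have I2: "(cmod I)\<^sup>2 \<le> (c + 2)\<^sup>2 * A"
    using power_mono[OF hIb, of 2] norm_ge_zero[of I] sA by (simp add: power_mult_distrib)
  have D2: "(cmod D)\<^sup>2 \<le> (2 * c + 2)\<^sup>2 * A"
    using power_mono[OF hDb, of 2] norm_ge_zero[of D] sA by (simp add: power_mult_distrib)
  have B2: "B \<le> (2 * c + 2)\<^sup>2 * A / (\<beta> - \<alpha>)"
    unfolding hB using D2 ba by (simp add: divide_right_mono)
  have "(cmod I)\<^sup>2 + A + B \<le> (c + 2)\<^sup>2 * A + A + (2 * c + 2)\<^sup>2 * A / (\<beta> - \<alpha>)"
    using I2 B2 by linarith
  also have "\<dots> = CC \<alpha> \<beta> * A" unfolding CC_def c_def by (simp add: algebra_simps)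
  finally show ?thesis .
qed



lemma int_bound:
  fixes f :: "real \<Rightarrow> complex"
  assumes "set_integrable lborel S f" "S \<in> sets lborel" "S \<subseteq> {0..1}" "\<And>x. x \<in> S \<Longrightarrow> cmod (f x) \<le> M"
  shows "cmod (LINT x:S|lborel. f x) \<le> measure lborel S * M"
proof -
  have "cmod (LINT x:S|lborel. f x) \<le> (LINT x:S|lborel. cmod (f x))"
    by (rule set_integral_norm_bound[OF assms(1)])
  also have "\<dots> \<le> (LINT x:S|lborel. M)"
    by (rule set_integral_mono[OF set_integrable_norm[OF assms(1)] sint_const[OF assms(2,3)] assms(4)])
  also have "\<dots> = measure lborel S * M"
    using set_integral_const[OF assms(2), of M] fin01[OF assms(3)] by simp
  finally show ?thesis .
qed

theorem proposition3p3:
  fixes \<alpha> \<beta> :: real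
  assumes "0 < \<alpha>" and "\<alpha> < \<beta>" and "\<beta> < 1"
  shows "\<exists>C>0. \<forall>p. admissible_coeff p \<longrightarrow>
           (\<forall>\<theta>\<in>{0..<1}. \<forall>w w'. V_perp p \<alpha> \<beta> \<theta> w w' \<longrightarrow>
              tnorm_sq \<alpha> \<beta> w w' \<le> C * (LINT y:Q1 \<alpha> \<beta>|lborel. (cmod (w' y))\<^sup>2))"
proof (intro exI[of _ "CC \<alpha> \<beta>"] conjI allI impI ballI)
  note ab = assms
  show "CC \<alpha> \<beta> > 0" by (rule CC_pos) (use assms in simp)
  fix p \<theta> and w w' :: "real \<Rightarrow> complex"
  assume Vp: "V_perp p \<alpha> \<beta> \<theta> w w'"
  define e where "e = exp (2 * pi * \<i> * complex_of_real \<theta>)"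
  have e1: "cmod e = 1" unfolding e_def by simp
  have H: "H1 w w'" and wp: "w 1 = e * w 0"
    using Vp unfolding V_perp_def H1_theta_def e_def by auto
  have orth: "\<And>v v'. V_theta p \<alpha> \<beta> \<theta> v v' \<Longrightarrow> ip \<alpha> \<beta> w w' v v' = 0"
    using Vp unfolding V_perp_def by auto
  define A where "A = (LINT y:Q1 \<alpha> \<beta>|lborel. (cmod (w' y))\<^sup>2)"
  define B where "B = (LINT y:{\<alpha><..<\<beta>}|lborel. (cmod (w' y))\<^sup>2)"
  define D where "D = (LINT t:{\<alpha><..<\<beta>}|lborel. w' t)"
  define I where "I = (LINT y:Q1 \<alpha> \<beta>|lborel. w y)"
  define a where "a = w 0"
  define F where "F = (\<lambda>x. LINT t:{0..x}|lborel. w' t)"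
  have Q1s: "Q1 \<alpha> \<beta> \<subseteq> {0..1}" "Q1 \<alpha> \<beta> \<in> sets lborel" using ab by (auto simp: Q1_def)
  have A0: "A \<ge> 0" unfolding A_def by (rule set_integral_nonneg') simp
  have Aint: "set_integrable lborel (Q1 \<alpha> \<beta>) (\<lambda>y. (cmod (w' y))\<^sup>2)" by (rule H1_sq_int[OF H Q1s(2,1)])
  have Hrep: "\<forall>x\<in>{0..1}. w x = w 0 + (LINT t:{0..x}|lborel. w' t)" using H unfolding H1_def by blast
  have Fi: "w x = a + F x" if "x \<in> {0..1}" for x
    using Hrep that unfolding a_def F_def by blast
  have F1: "F 1 = (e - 1) * a"
    using Fi[of 1] wp unfolding a_def by (simp add: algebra_simps)
  have Fsplit: "F y = F x + (LINT t:{x<..y}|lborel. w' t)" if "0 \<le> x" "x \<le> y" "y \<le> 1" for x y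
    unfolding F_def by (rule split_Icc[OF that(1,2) H1_int[OF H]]) (use that in auto)
  have DF: "D = F \<beta> - F \<alpha>"
  proof -
    have "(LINT t:{\<alpha><..\<beta>}|lborel. w' t) = D"
      unfolding D_def by (rule set_integral_fin_diff[of "{\<beta>}"]) auto
    then show ?thesis using Fsplit[of \<alpha> \<beta>] ab by simp
  qed
  have Flo: "cmod (F x) \<le> sqrt A" if "x \<in> {0..\<alpha>}" for x
  proof -
    have x: "0 \<le> x" "x \<le> \<alpha>" using that by auto
    have "(cmod (F x))\<^sup>2 \<le> measure lborel {0..x} * (LINT t:{0..x}|lborel. (cmod (w' t))\<^sup>2)"
      unfolding F_def by (rule CS_H1[OF H]) (use x ab in auto)
    also have "\<dots> \<le> 1 * A"
    proof (rule mult_mono)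
      show "measure lborel {0..x} \<le> 1" using x ab by simp
      have "(LINT t:{0..x}|lborel. (cmod (w' t))\<^sup>2) \<le> (LINT t:{0..\<alpha>}|lborel. (cmod (w' t))\<^sup>2)"
        by (rule set_integral_mono_set[OF _ _ H1_sq_int[OF H]]) (use x ab in auto)
      also have "\<dots> = (LINT t:{0<..<\<alpha>}|lborel. (cmod (w' t))\<^sup>2)"
        by (rule set_integral_fin_diff[of "{0, \<alpha>}"]) auto
      also have "\<dots> \<le> A"
        unfolding A_def by (rule set_integral_mono_set[OF _ _ Aint]) (auto simp: Q1_def)
      finally show "(LINT t:{0..x}|lborel. (cmod (w' t))\<^sup>2) \<le> A" .
      show "0 \<le> (LINT t:{0..x}|lborel. (cmod (w' t))\<^sup>2)" by (rule set_integral_nonneg') simp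
    qed simp_all
    finally show ?thesis by (intro real_le_rsqrt) simp
  qed
  have Fhi: "cmod (F 1 - F x) \<le> sqrt A" if "x \<in> {\<beta>..1}" for x
  proof -
    have x: "\<beta> \<le> x" "x \<le> 1" using that by auto
    have eq: "F 1 - F x = (LINT t:{x<..1}|lborel. w' t)" using Fsplit[of x 1] x ab by simp
    have "(cmod (F 1 - F x))\<^sup>2 \<le> measure lborel {x<..1} * (LINT t:{x<..1}|lborel. (cmod (w' t))\<^sup>2)"
      unfolding eq by (rule CS_H1[OF H]) (use x ab in auto)
    also have "\<dots> \<le> 1 * A"
    proof (rule mult_mono)
      show "measure lborel {x<..1} \<le> 1" using x ab by simp
      have "(LINT t:{x<..1}|lborel. (cmod (w' t))\<^sup>2) = (LINT t:{x<..<1}|lborel. (cmod (w' t))\<^sup>2)"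
        by (rule set_integral_fin_diff[of "{1}"]) auto
      also have "\<dots> \<le> A"
        unfolding A_def by (rule set_integral_mono_set[OF _ _ Aint]) (use x in \<open>auto simp: Q1_def\<close>)
      finally show "(LINT t:{x<..1}|lborel. (cmod (w' t))\<^sup>2) \<le> A" .
      show "0 \<le> (LINT t:{x<..1}|lborel. (cmod (w' t))\<^sup>2)" by (rule set_integral_nonneg') simp
    qed simp_all
    finally show ?thesis by (intro real_le_rsqrt) simp
  qed
  have hD: "cmod (D - (e - 1) * a) \<le> 2 * sqrt A"
  proof -
    have "D - (e - 1) * a = - (F 1 - F \<beta>) - F \<alpha>" unfolding DF F1 by simp
    then have "cmod (D - (e - 1) * a) \<le> cmod (F 1 - F \<beta>) + cmod (F \<alpha>)"
      using norm_triangle_ineq4[of "- (F 1 - F \<beta>)" "F \<alpha>"] by (simp add: norm_minus_commute)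
    also have "\<dots> \<le> sqrt A + sqrt A"
      by (intro add_mono Fhi Flo) (use ab in auto)
    finally show ?thesis by simp
  qed
  have w'i01: "set_integrable lborel {0..1} w'" by (rule H1_int[OF H]) auto
  have Fcont: "continuous_on {0..1} F"
  proof -
    have c: "continuous_on {0..1} (\<lambda>x. integral {0..x} w')"
      by (rule indefinite_integral_continuous_1[OF set_borel_integral_eq_integral(1)[OF w'i01]])
    have Feq: "F x = integral {0..x} w'" if "x \<in> {0..1}" for x
      unfolding F_def by (rule set_borel_integral_eq_integral(2)[OF H1_int[OF H]]) (use that in auto)
    have "continuous_on {0..1} F = continuous_on {0..1} (\<lambda>x. integral {0..x} w')"
      by (rule continuous_on_cong[OF refl Feq])
    then show ?thesis using c by simp
  qed
  have Fint: "set_integrable lborel {0..1} F" by (rule borel_integrable_atLeastAtMost'[OF Fcont])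
  have s1: "{0<..<\<alpha>} \<subseteq> {0..1}" "{\<beta><..<1} \<subseteq> {0..1}" using ab by auto
  have Fi1: "set_integrable lborel {0<..<\<alpha>} F" by (rule set_integrable_subset[OF Fint _ s1(1)]) simp
  have Fi2: "set_integrable lborel {\<beta><..<1} F" by (rule set_integrable_subset[OF Fint _ s1(2)]) simp
  have c1i: "set_integrable lborel {0<..<\<alpha>} (\<lambda>x. a)" by (rule sint_const[OF _ s1(1)]) simp
  have c2i: "set_integrable lborel {\<beta><..<1} (\<lambda>x. e * a)" by (rule sint_const[OF _ s1(2)]) simp
  have c3i: "set_integrable lborel {\<beta><..<1} (\<lambda>x. F 1)" by (rule sint_const[OF _ s1(2)]) simp
  have G2i: "set_integrable lborel {\<beta><..<1} (\<lambda>x. F 1 - F x)" by (rule set_integral_diff(1)[OF c3i Fi2])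
  have w1: "\<And>x. x \<in> {0<..<\<alpha>} \<Longrightarrow> w x = a + F x" using Fi ab by auto
  have w2: "\<And>x. x \<in> {\<beta><..<1} \<Longrightarrow> w x = e * a - (F 1 - F x)" using Fi ab F1 by (auto simp: algebra_simps)
  have wi1: "set_integrable lborel {0<..<\<alpha>} w"
    using set_integral_add(1)[OF c1i Fi1] w1 by (subst set_integrable_cong[where f'="\<lambda>x. a + F x"]) auto
  have wi2: "set_integrable lborel {\<beta><..<1} w"
    using set_integral_diff(1)[OF c2i G2i] w2 by (subst set_integrable_cong[where f'="\<lambda>x. e * a - (F 1 - F x)"]) auto
  have I1: "(LINT y:{0<..<\<alpha>}|lborel. w y) = of_real \<alpha> * a + (LINT y:{0<..<\<alpha>}|lborel. F y)"
  proof -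
    have "(LINT y:{0<..<\<alpha>}|lborel. w y) = (LINT y:{0<..<\<alpha>}|lborel. a + F y)"
      by (rule set_lebesgue_integral_cong) (use w1 in auto)
    also have "\<dots> = (LINT y:{0<..<\<alpha>}|lborel. a) + (LINT y:{0<..<\<alpha>}|lborel. F y)"
      by (rule set_integral_add(2)[OF c1i Fi1])
    also have "(LINT y:{0<..<\<alpha>}|lborel. a) = of_real \<alpha> * a"
      using set_integral_const[of "{0<..<\<alpha>}" lborel a] ab by (simp add: scaleR_conv_of_real)
    finally show ?thesis .
  qed
  have I2: "(LINT y:{\<beta><..<1}|lborel. w y) = of_real (1 - \<beta>) * (e * a) - (LINT y:{\<beta><..<1}|lborel. F 1 - F y)"
  proof -
    have "(LINT y:{\<beta><..<1}|lborel. w y) = (LINT y:{\<beta><..<1}|lborel. e * a - (F 1 - F y))"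
      by (rule set_lebesgue_integral_cong) (use w2 in auto)
    also have "\<dots> = (LINT y:{\<beta><..<1}|lborel. e * a) - (LINT y:{\<beta><..<1}|lborel. F 1 - F y)"
      by (rule set_integral_diff(2)[OF c2i G2i])
    also have "(LINT y:{\<beta><..<1}|lborel. e * a) = of_real (1 - \<beta>) * (e * a)"
      using set_integral_const[of "{\<beta><..<1}" lborel "e * a"] ab by (simp add: scaleR_conv_of_real del: of_real_diff)
    finally show ?thesis .
  qed
  have Isplit: "I = (LINT y:{0<..<\<alpha>}|lborel. w y) + (LINT y:{\<beta><..<1}|lborel. w y)"
    unfolding I_def Q1_def by (rule set_integral_Un[OF _ wi1 wi2]) (use ab in auto)
  have hI: "cmod (I - a * (of_real \<alpha> + e * of_real (1 - \<beta>))) \<le> 2 * sqrt A"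
  proof -
    have "I - a * (of_real \<alpha> + e * of_real (1 - \<beta>)) = (LINT y:{0<..<\<alpha>}|lborel. F y) - (LINT y:{\<beta><..<1}|lborel. F 1 - F y)"
      unfolding Isplit I1 I2 by (simp add: algebra_simps del: of_real_diff)
    then have "cmod (I - a * (of_real \<alpha> + e * of_real (1 - \<beta>))) \<le> cmod (LINT y:{0<..<\<alpha>}|lborel. F y) + cmod (LINT y:{\<beta><..<1}|lborel. F 1 - F y)"
      using norm_triangle_ineq4 by simp
    also have "\<dots> \<le> measure lborel {0<..<\<alpha>} * sqrt A + measure lborel {\<beta><..<1} * sqrt A"
    proof (intro add_mono)
      show "cmod (LINT y:{0<..<\<alpha>}|lborel. F y) \<le> measure lborel {0<..<\<alpha>} * sqrt A"
        by (rule int_bound[OF Fi1 _ s1(1)]) (use Flo in auto)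
      show "cmod (LINT y:{\<beta><..<1}|lborel. F 1 - F y) \<le> measure lborel {\<beta><..<1} * sqrt A"
        by (rule int_bound[OF G2i _ s1(2)]) (use Fhi in auto)
    qed
    also have "\<dots> \<le> 1 * sqrt A + 1 * sqrt A"
      using ab A0 by (intro add_mono mult_right_mono) auto
    finally show ?thesis by simp
  qed
  have ba: "\<beta> - \<alpha> \<noteq> 0" using ab by simp
  have orth2: "I * cnj (of_real \<alpha> + e * of_real (1 - \<beta>)) + cnj ((e - 1) / of_real (\<beta> - \<alpha>)) * D = 0"
  proof -
    have cond: "1 + 0 * (LINT t:{\<alpha><..<\<beta>}|lborel. w' t) + ((e - 1) / of_real (\<beta> - \<alpha>)) * of_real (\<beta> - \<alpha>) = exp (2 * pi * \<i> * complex_of_real \<theta>) * 1"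
      using ba unfolding e_def by simp
    note T = test_fn[OF ab H cond]
    show ?thesis using orth[OF T(1)] unfolding ip_def T(2) T(3) I_def[symmetric] D_def[symmetric] e_def[symmetric]
      by simp
  qed
  have hB: "B = (cmod D)\<^sup>2 / (\<beta> - \<alpha>)"
  proof -
    have cond: "0 + 1 * (LINT t:{\<alpha><..<\<beta>}|lborel. w' t) + (- D / of_real (\<beta> - \<alpha>)) * of_real (\<beta> - \<alpha>) = exp (2 * pi * \<i> * complex_of_real \<theta>) * 0"
      using ba unfolding D_def by simp
    note T = test_fn[OF ab H cond]
    have "of_real B + cnj (- D / of_real (\<beta> - \<alpha>)) * D = 0"
      using orth[OF T(1)] unfolding ip_def T(2) T(3) I_def[symmetric] D_def[symmetric] B_def[symmetric] by simp
    then have "of_real B = cnj D * D / of_real (\<beta> - \<alpha>)" by (simp add: algebra_simps)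
    also have "\<dots> = of_real ((cmod D)\<^sup>2 / (\<beta> - \<alpha>))"
      using complex_norm_square[of D] by (simp add: mult.commute)
    finally show ?thesis by (simp only: of_real_eq_iff)
  qed
  have tn: "tnorm_sq \<alpha> \<beta> w w' = (cmod I)\<^sup>2 + A + B"
  proof -
    have "(LINT y:{0<..<1}|lborel. (cmod (w' y))\<^sup>2) = (LINT y:(Q1 \<alpha> \<beta> \<union> {\<alpha><..<\<beta>})|lborel. (cmod (w' y))\<^sup>2)"
      by (rule set_integral_fin_diff[of "{\<alpha>, \<beta>}"]) (use ab in \<open>auto simp: Q1_def\<close>)
    also have "\<dots> = A + B"
      unfolding A_def B_def
      by (rule set_integral_Un[OF _ Aint H1_sq_int[OF H]]) (use ab in \<open>auto simp: Q1_def\<close>)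
    finally show ?thesis unfolding tnorm_sq_def I_def by simp
  qed
  show "tnorm_sq \<alpha> \<beta> w w' \<le> CC \<alpha> \<beta> * (LINT y:Q1 \<alpha> \<beta>|lborel. (cmod (w' y))\<^sup>2)"
    unfolding tn A_def[symmetric] by (rule algebra_part[OF ab e1 A0 hD hI orth2 hB])
qed


end
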